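(* Under the standing assumptions below, Problem (BP) and Problem (OP) are equivalent in the following sense. (a) If $\bar z$ is an optimal solution of (OP) and $(\bar x,\bar y)$ is an optimal solution of the problem $MP(\bar z)$ defining $\varphi(\bar z)$, then $(\bar x,\bar y)$ is an optimal solution of (BP). (b) Conversely, if $(\bar x,\bar y)$ is an optimal solution of (BP), then $\bar z=f(\bar x)$ is an optimal solution of (OP), and $\varphi(f(\bar x))=h(\bar x,\bar y)$. In particular, the optimal values of (BP) and (OP) coincide.
   Context: Standing assumptions: $X=\{x\in\mathbb{R}^n\mid s(x)\le 0\}$ is nonempty, bounded and convex, where $s:\mathbb{R}^n\to\mathbb{R}^q$ is continuously differentiable with quasiconvex components. $f=(f_1,\dots,f_p):\mathbb{R}^n\to\mathbb{R}^p$ is continuously differentiable with each $f_i$ pseudoconvex; $g:\mathbb{R}^n\times\mathbb{R}^m\to\mathbb{R}^\ell$ is continuously differentiable with quasiconvex components; $h:\mathbb{R}^n\times\mathbb{R}^m\to\mathbb{R}$ is continuous and pseudoconvex. (A differentiable $G$ is pseudoconvex if $\nabla G(x)^\top(\tilde x-x)\ge 0\Rightarrow G(\tilde x)\ge G(x)$; quasiconvex if $G(\lambda x+(1-\lambda)\tilde x)\le\max\{G(x),G(\tilde x)\}$ for $\lambda\in[0,1]$.) For $a,b\in\mathbb{R}^p$, $a\le b$ means $a_i\le b_i$ for all $i$ and $a<b$ means $a_i<b_i$ for all $i$. For $Q\subset\mathbb{R}^p$, ${\rm WMin}\,Q$ is the set of $q\in Q$ such that there is no $q'\in Q$ with $q'<q$.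 $X_{WE}$ denotes the set of $x\in X$ such that there is no $x'\in X$ with $f(x')<f(x)$ (weakly efficient solutions of $\min\{f(x)\mid x\in X\}$). Problem (BP): minimize $h(x,y)$ subject to $g(x,y)\le 0$, $y\in\mathbb{R}^m_+$, $x\in X_{WE}$. Let $\mathcal{G}=\{(x,y)\mid x\in X,\ y\in\mathbb{R}^m_+,\ g(x,y)\le 0\}$, $\mathcal{Z}=\{f(x)\mid x\in X\}$, $\mathcal{Z}^+=\mathcal{Z}+\mathbb{R}^p_+$, let $M\in\mathbb{R}^p$ satisfy $f(x)\le M$ for all $x\in X$, and $\mathcal{Z}^\diamond=\mathcal{Z}^+\cap(M-\mathbb{R}^p_+)$. For $z\in\mathcal{Z}^\diamond$, $MP(z)$ is the problem $\min\{h(x,y)\mid (x,y)\in\mathcal{G},\ f(x)\le z\}$ and $\varphi(z)$ is its optimal value. Problem (OP): minimize $\varphi(z)$ subject to $z\in{\rm WMin}\,\mathcal{Z}^\diamond$. *)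

theory Defs
  imports "HOL-Analysis.Analysis"
begin

text \<open>Componentwise strict order on R^p: a < b iff a_i < b_i for all i.
  (The library's x < y on vectors is the non-strict-componentwise partial order,
  so we use our own.)  The non-strict order is the library's x \<le> y,
  which is componentwise.\<close>
definition vless :: "real^'p \<Rightarrow> real^'p \<Rightarrow> bool" (infix "<\<^sub>v" 50) where
  "a <\<^sub>v b \<longleftrightarrow> (\<forall>i. a $ i < b $ i)"

definition quasiconvex_fun :: "('a::real_vector \<Rightarrow> real) \<Rightarrow> bool" where
  "quasiconvex_fun G \<longleftrightarrow>
     (\<forall>x x' t. 0 \<le> t \<and> t \<le> 1 \<longrightarrow> G (t *\<^sub>R x + (1 - t) *\<^sub>R x') \<le> max (G x) (G x'))"

text \<open>Pseudoconvexity of a differentiable function; the gradient pairing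
  \<nabla>G(x)^T (x' - x) is the Frechet derivative of G at x applied to x' - x.\<close>
definition pseudoconvex_fun :: "('a::real_normed_vector \<Rightarrow> real) \<Rightarrow> bool" where
  "pseudoconvex_fun G \<longleftrightarrow> (\<forall>x. G differentiable (at x)) \<and>
     (\<forall>x x'. frechet_derivative G (at x) (x' - x) \<ge> 0 \<longrightarrow> G x' \<ge> G x)"

definition C1_fun :: "('a::real_normed_vector \<Rightarrow> 'b::real_normed_vector) \<Rightarrow> bool" where
  "C1_fun F \<longleftrightarrow> (\<exists>F'. (\<forall>x. (F has_derivative blinfun_apply (F' x)) (at x)) \<and> continuous_on UNIV F')"

definition feasX :: "(real^'n \<Rightarrow> real^'q) \<Rightarrow> (real^'n) set" where
  "feasX s = {x. s x \<le> 0}"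

definition XWE :: "(real^'n \<Rightarrow> real^'q) \<Rightarrow> (real^'n \<Rightarrow> real^'p) \<Rightarrow> (real^'n) set" where
  "XWE s f = {x \<in> feasX s. \<not> (\<exists>x' \<in> feasX s. f x' <\<^sub>v f x)}"

definition WMin :: "(real^'p) set \<Rightarrow> (real^'p) set" where
  "WMin Q = {q \<in> Q. \<not> (\<exists>q' \<in> Q. q' <\<^sub>v q)}"

definition feasG :: "(real^'n \<Rightarrow> real^'q) \<Rightarrow> (real^'n \<Rightarrow> real^'m \<Rightarrow> real^'l)
    \<Rightarrow> ((real^'n) \<times> (real^'m)) set" where
  "feasG s g = {(x, y). x \<in> feasX s \<and> 0 \<le> y \<and> g x y \<le> 0}"

definition Zdiam :: "(real^'n \<Rightarrow> real^'q) \<Rightarrow> (real^'n \<Rightarrow> real^'p) \<Rightarrow> real^'p \<Rightarrow> (real^'p) set" where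
  "Zdiam s f M = {z + d | z d. z \<in> f ` feasX s \<and> 0 \<le> d} \<inter> {w. w \<le> M}"

definition feasMP :: "(real^'n \<Rightarrow> real^'q) \<Rightarrow> (real^'n \<Rightarrow> real^'p) \<Rightarrow> (real^'n \<Rightarrow> real^'m \<Rightarrow> real^'l)
    \<Rightarrow> real^'p \<Rightarrow> ((real^'n) \<times> (real^'m)) set" where
  "feasMP s f g z = {(x, y) \<in> feasG s g. f x \<le> z}"

text \<open>Optimal value \<phi>(z) of MP(z), as an extended real (+\<infinity> if infeasible).\<close>
definition phi :: "(real^'n \<Rightarrow> real^'q) \<Rightarrow> (real^'n \<Rightarrow> real^'p) \<Rightarrow> (real^'n \<Rightarrow> real^'m \<Rightarrow> real^'l)
    \<Rightarrow> (real^'n \<Rightarrow> real^'m \<Rightarrow> real) \<Rightarrow> real^'p \<Rightarrow> ereal" where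
  "phi s f g h z = (INF p \<in> feasMP s f g z. ereal (h (fst p) (snd p)))"

definition optMP where
  "optMP s f g h z x y \<longleftrightarrow> (x, y) \<in> feasMP s f g z \<and>
     (\<forall>(x', y') \<in> feasMP s f g z. h x y \<le> h x' y')"

definition feasBP :: "(real^'n \<Rightarrow> real^'q) \<Rightarrow> (real^'n \<Rightarrow> real^'p) \<Rightarrow> (real^'n \<Rightarrow> real^'m \<Rightarrow> real^'l)
    \<Rightarrow> ((real^'n) \<times> (real^'m)) set" where
  "feasBP s f g = {(x, y). g x y \<le> 0 \<and> 0 \<le> y \<and> x \<in> XWE s f}"

definition optBP where
  "optBP s f g h x y \<longleftrightarrow> (x, y) \<in> feasBP s f g \<and>
     (\<forall>(x', y') \<in> feasBP s f g. h x y \<le> h x' y')"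

definition optOP where
  "optOP s f g h M z \<longleftrightarrow> z \<in> WMin (Zdiam s f M) \<and>
     (\<forall>z' \<in> WMin (Zdiam s f M). phi s f g h z \<le> phi s f g h z')"

end

theory Submission
  imports Defs
begin

lemma vless_le_trans: "a <\<^sub>v b \<Longrightarrow> b \<le> c \<Longrightarrow> a <\<^sub>v c"
  unfolding vless_def less_eq_vec_def by (meson less_le_trans)

lemma WMin_XWE:
  assumes z: "z \<in> WMin (Zdiam s f M)" and x: "x \<in> feasX s" and fx: "f x \<le> z"
    and M_bd: "\<And>x. x \<in> feasX s \<Longrightarrow> f x \<le> M"
  shows "x \<in> XWE s f"
proof -
  { fix x' assume x': "x' \<in> feasX s" and lt: "f x' <\<^sub>v f x"
    have "f x' = f x' + 0 \<and> f x' \<in> f ` feasX s \<and> (0::real^'a) \<le> 0" using x' by simp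
    hence "f x' \<in> Zdiam s f M" unfolding Zdiam_def using M_bd[OF x'] by blast
    moreover have "f x' <\<^sub>v z" using lt fx by (rule vless_le_trans)
    ultimately have False using z unfolding WMin_def by blast }
  thus ?thesis using x unfolding XWE_def by blast
qed

lemma XWE_WMin:
  assumes x: "x \<in> XWE s f" and M_bd: "\<And>x. x \<in> feasX s \<Longrightarrow> f x \<le> M"
  shows "f x \<in> WMin (Zdiam s f M)"
proof -
  have xX: "x \<in> feasX s" using x unfolding XWE_def by blast
  have "f x = f x + 0 \<and> f x \<in> f ` feasX s \<and> (0::real^'a) \<le> 0" using xX by simp
  hence "f x \<in> Zdiam s f M" unfolding Zdiam_def using M_bd[OF xX] by blast
  moreover
  { fix q assume q: "q \<in> Zdiam s f M" and lt: "q <\<^sub>v f x"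
    then obtain x'' d where "x'' \<in> feasX s" "0 \<le> d" "q = f x'' + d"
      unfolding Zdiam_def by blast
    hence "f x'' \<le> q" by (simp add: less_eq_vec_def)
    hence "f x'' <\<^sub>v f x" using lt unfolding vless_def less_eq_vec_def
      by (meson le_less_trans)
    hence False using x \<open>x'' \<in> feasX s\<close> unfolding XWE_def by blast }
  ultimately show ?thesis unfolding WMin_def by blast
qed

lemma feasMP_sub:
  assumes z: "z \<in> WMin (Zdiam s f M)" and M_bd: "\<And>x. x \<in> feasX s \<Longrightarrow> f x \<le> M"
  shows "feasMP s f g z \<subseteq> feasBP s f g"
proof
  fix p assume "p \<in> feasMP s f g z"
  then obtain x y where p: "p = (x,y)" "x \<in> feasX s" "0 \<le> y" "g x y \<le> 0" "f x \<le> z"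
    unfolding feasMP_def feasG_def by auto
  have "x \<in> XWE s f" using WMin_XWE[OF z p(2) p(5) M_bd] by blast
  thus "p \<in> feasBP s f g" using p unfolding feasBP_def by auto
qed

lemma BP_in_MP: "(x,y) \<in> feasBP s f g \<Longrightarrow> (x,y) \<in> feasMP s f g (f x)"
  unfolding feasBP_def feasMP_def feasG_def XWE_def by auto

lemma optMP_phi: "optMP s f g h z x y \<Longrightarrow> phi s f g h z = ereal (h x y)"
  unfolding optMP_def phi_def
  by (intro antisym INF_lower2[of "(x,y)"]) (auto intro!: INF_greatest)

theorem proposition3p2:
  fixes s :: "real^'n \<Rightarrow> real^'q"
    and f :: "real^'n \<Rightarrow> real^'p"
    and g :: "real^'n \<Rightarrow> real^'m \<Rightarrow> real^'l"
    and h :: "real^'n \<Rightarrow> real^'m \<Rightarrow> real"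
    and M :: "real^'p"
  assumes X_ne: "feasX s \<noteq> {}" and X_bdd: "bounded (feasX s)" and X_cvx: "convex (feasX s)"
    and s_C1: "C1_fun s" and s_qc: "\<And>i. quasiconvex_fun (\<lambda>x. s x $ i)"
    and f_C1: "C1_fun f" and f_pc: "\<And>i. pseudoconvex_fun (\<lambda>x. f x $ i)"
    and g_C1: "C1_fun (\<lambda>(x, y). g x y)" and g_qc: "\<And>i. quasiconvex_fun (\<lambda>(x, y). g x y $ i)"
    and h_cont: "continuous_on UNIV (\<lambda>(x, y). h x y)" and h_pc: "pseudoconvex_fun (\<lambda>(x, y). h x y)"
    and M_bd: "\<And>x. x \<in> feasX s \<Longrightarrow> f x \<le> M"
  shows "(\<forall>zb xb yb. optOP s f g h M zb \<and> optMP s f g h zb xb yb \<longrightarrow> optBP s f g h xb yb)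
    \<and> (\<forall>xb yb. optBP s f g h xb yb \<longrightarrow>
          optOP s f g h M (f xb) \<and> phi s f g h (f xb) = ereal (h xb yb))
    \<and> (INF p \<in> feasBP s f g. ereal (h (fst p) (snd p)))
        = (INF z \<in> WMin (Zdiam s f M). phi s f g h z)"
proof (intro conjI allI impI)
  have phi_le: "phi s f g h (f x) \<le> ereal (h x y)" if "(x,y) \<in> feasBP s f g" for x y
    unfolding phi_def using BP_in_MP[OF that] by (rule INF_lower2) auto
  have BP_le_phi: "(INF p \<in> feasBP s f g. ereal (h (fst p) (snd p))) \<le> phi s f g h z"
    if "z \<in> WMin (Zdiam s f M)" for z
    unfolding phi_def using feasMP_sub[OF that M_bd] by (rule INF_superset_mono) auto
  have fW: "f x \<in> WMin (Zdiam s f M)" if "(x,y) \<in> feasBP s f g" for x y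
    using that XWE_WMin[OF _ M_bd] unfolding feasBP_def by auto
  {
    fix zb xb yb assume A: "optOP s f g h M zb \<and> optMP s f g h zb xb yb"
    hence zW: "zb \<in> WMin (Zdiam s f M)" unfolding optOP_def by blast
    have mp: "(xb,yb) \<in> feasMP s f g zb" using A unfolding optMP_def by blast
    have feas: "(xb,yb) \<in> feasBP s f g" using feasMP_sub[OF zW M_bd] mp by blast
    have ph: "phi s f g h zb = ereal (h xb yb)" using A optMP_phi by blast
    { fix x' y' assume B: "(x',y') \<in> feasBP s f g"
      have "ereal (h xb yb) \<le> phi s f g h (f x')"
        using A fW[OF B] ph unfolding optOP_def by auto
      also have "\<dots> \<le> ereal (h x' y')" by (rule phi_le[OF B])
      finally have "h xb yb \<le> h x' y'" by simp }
    thus "optBP s f g h xb yb" using feas unfolding optBP_def by auto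
  }
  {
    fix xb yb assume A: "optBP s f g h xb yb"
    have feas: "(xb,yb) \<in> feasBP s f g" using A unfolding optBP_def by blast
    have low: "ereal (h xb yb) \<le> phi s f g h z" if "z \<in> WMin (Zdiam s f M)" for z
      unfolding phi_def
    proof (rule INF_greatest)
      fix p assume "p \<in> feasMP s f g z"
      hence "p \<in> feasBP s f g" using feasMP_sub[OF that M_bd] by blast
      thus "ereal (h xb yb) \<le> ereal (h (fst p) (snd p))" using A unfolding optBP_def
        by (cases p) auto
    qed
    show ph: "phi s f g h (f xb) = ereal (h xb yb)"
      using phi_le[OF feas] low[OF fW[OF feas]] by (rule antisym)
    show "optOP s f g h M (f xb)" unfolding optOP_def
      using fW[OF feas] low ph by auto
  }
  show "(INF p \<in> feasBP s f g. ereal (h (fst p) (snd p)))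
        = (INF z \<in> WMin (Zdiam s f M). phi s f g h z)"
  proof (rule antisym)
    show "(INF p \<in> feasBP s f g. ereal (h (fst p) (snd p))) \<le> (INF z \<in> WMin (Zdiam s f M). phi s f g h z)"
      using BP_le_phi by (rule INF_greatest)
    show "(INF z \<in> WMin (Zdiam s f M). phi s f g h z) \<le> (INF p \<in> feasBP s f g. ereal (h (fst p) (snd p)))"
    proof (rule INF_greatest)
      fix p assume p: "p \<in> feasBP s f g"
      obtain x y where xy: "p = (x,y)" by (cases p)
      have "(INF z \<in> WMin (Zdiam s f M). phi s f g h z) \<le> phi s f g h (f x)"
        using fW p xy by (intro INF_lower) auto
      also have "\<dots> \<le> ereal (h x y)" using phi_le p xy by auto
      finally show "(INF z \<in> WMin (Zdiam s f M). phi s f g h z) \<le> ereal (h (fst p) (snd p))"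
        using xy by simp
    qed
  qed
qed

end
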